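(* In the setting described in the context, suppose $C_1$ is sufficiently large compared with $C_{\mathsf{cover}}$ (i.e., $C_1\gg C_{\mathsf{cover}}$). Then for each $1\le t\le T$, \[ \mathbb{P}\big((X_t,X_{t-1})\notin\mathcal A_t\big)\le\exp\Big(-\frac{C_1}{4}k\log T\Big). \]
   Context: Let $d\ge1$, $T\ge2$ be integers. Learning rates: $\beta_1=T^{-c_0}$, $\beta_{t+1}=\frac{c_1\log T}{T}\min\{\beta_1(1+\frac{c_1\log T}{T})^t,1\}$ ($t=1,\dots,T-1$), with $c_0,c_1>0$ sufficiently large universal constants; $\alpha_t=1-\beta_t$, $\bar\alpha_t=\prod_{i=1}^t\alpha_i$. Forward process: $X_0\sim p_{\mathsf{data}}$ on $\mathbb{R}^d$, $X_t=\sqrt{\alpha_t}X_{t-1}+\sqrt{1-\alpha_t}W_t$ ($t=1,\dots,T$), $W_t$ i.i.d. $\mathcal N(0,I_d)$ independent of $X_0$. Data assumptions: $\mathcal X$ is the support of $p_{\mathsf{data}}$; $\varepsilon=T^{-c_\varepsilon}$ with $c_\varepsilon$ a sufficiently large universal constant; $N_\varepsilon=N_\varepsilon(\mathcal X)$ is the minimal cardinality of an $\varepsilon$-net of $\mathcal X$ (a subset of $\mathcal X$ within distance $\varepsilon$ of every point of $\mathcal X$); $k>0$ satisfies $\log N_\varepsilon\le C_{\mathsf{cover}}k\log T$ for a constant $C_{\mathsf{cover}}>0$; $\sup_{x\in\mathcal X}\|x\|_2\le T^{c_R}$ for a universal constant $c_R>0$. Typical sets: let $\{x_i^\star\}_{1\le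 i\le N_\varepsilon}$ be an $\varepsilon$-net of $\mathcal X$ and $\{\mathcal B_i\}_{1\le i\le N_\varepsilon}$ pairwise disjoint sets covering $\mathcal X$ with $x_i^\star\in\mathcal B_i$ and $\mathcal B_i$ contained in the closed ball of radius $\varepsilon$ around $x_i^\star$. Let $C_1>0$ be a universal constant. Define $\mathcal I=\{i:\mathbb P(X_0\in\mathcal B_i)\ge\exp(-C_1k\log T)\}$; $\mathcal G=\{\omega\in\mathbb{R}^d:\|\omega\|_2\le2\sqrt d+\sqrt{C_1k\log T}$ and $|(x_i^\star-x_j^\star)^\top\omega|\le\sqrt{C_1k\log T}\,\|x_i^\star-x_j^\star\|_2$ for all $1\le i,j\le N_\varepsilon\}$; $\mathcal T_t=\{\sqrt{\bar\alpha_t}x_0+\sqrt{1-\bar\alpha_t}\,\omega:x_0\in\cup_{i\in\mathcal I}\mathcal B_i,\ \omega\in\mathcal G\}$; $\mathcal A_t=\{(x_t,x_{t-1})\in\mathbb{R}^d\times\mathbb{R}^d:x_t\in\mathcal T_t,\ (x_t-\sqrt{\alpha_t}x_{t-1})/\sqrt{1-\alpha_t}\in\mathcal G\}$. *)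

theory Defs
  imports "HOL-Probability.Probability"
begin

text \<open>Vectors of R^d are represented as extensional functions on {..<d}
  (elements of PiE {..<d} (\<lambda>_. UNIV)), so that the dimension d is an ordinary
  natural number and the universal constants can be quantified uniformly in d.\<close>

definition Rd :: "nat \<Rightarrow> (nat \<Rightarrow> real) measure" where
  "Rd d = PiM {..<d} (\<lambda>_. (borel :: real measure))"

definition vnorm :: "nat \<Rightarrow> (nat \<Rightarrow> real) \<Rightarrow> real" where
  "vnorm d x = sqrt (\<Sum>i<d. (x i)\<^sup>2)"

definition vinner :: "nat \<Rightarrow> (nat \<Rightarrow> real) \<Rightarrow> (nat \<Rightarrow> real) \<Rightarrow> real" where
  "vinner d x y = (\<Sum>i<d. x i * y i)"

definition vdist :: "nat \<Rightarrow> (nat \<Rightarrow> real) \<Rightarrow> (nat \<Rightarrow> real) \<Rightarrow> real" where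
  "vdist d x y = vnorm d (\<lambda>i. x i - y i)"

definition vlin :: "nat \<Rightarrow> real \<Rightarrow> (nat \<Rightarrow> real) \<Rightarrow> real \<Rightarrow> (nat \<Rightarrow> real) \<Rightarrow> (nat \<Rightarrow> real)" where
  "vlin d a x b y = (\<lambda>i\<in>{..<d}. a * x i + b * y i)"

definition std_gauss :: "nat \<Rightarrow> (nat \<Rightarrow> real) measure" where
  "std_gauss d = PiM {..<d} (\<lambda>_. density lborel (\<lambda>x. ennreal (std_normal_density x)))"

definition support_of :: "nat \<Rightarrow> (nat \<Rightarrow> real) measure \<Rightarrow> (nat \<Rightarrow> real) set" where
  "support_of d \<mu> = {x \<in> space (Rd d). \<forall>e>0. emeasure \<mu> {y \<in> space (Rd d). vdist d x y < e} > 0}"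

definition is_eps_net :: "nat \<Rightarrow> (nat \<Rightarrow> real) set \<Rightarrow> (nat \<Rightarrow> real) set \<Rightarrow> real \<Rightarrow> bool" where
  "is_eps_net d S A eps = (finite A \<and> A \<subseteq> S \<and> (\<forall>x\<in>S. \<exists>y\<in>A. vdist d x y \<le> eps))"

definition covering_number :: "nat \<Rightarrow> (nat \<Rightarrow> real) set \<Rightarrow> real \<Rightarrow> nat" where
  "covering_number d S eps = (LEAST n. \<exists>A. is_eps_net d S A eps \<and> card A = n)"

definition beta :: "real \<Rightarrow> real \<Rightarrow> nat \<Rightarrow> nat \<Rightarrow> real" where
  "beta c0 c1 T t =
     (if t \<le> 1 then real T powr (-c0)
      else c1 * ln (real T) / real T *
           min (real T powr (-c0) * (1 + c1 * ln (real T) / real T) ^ (t - 1)) 1)"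

definition alpha :: "real \<Rightarrow> real \<Rightarrow> nat \<Rightarrow> nat \<Rightarrow> real" where
  "alpha c0 c1 T t = 1 - beta c0 c1 T t"

definition alphabar :: "real \<Rightarrow> real \<Rightarrow> nat \<Rightarrow> nat \<Rightarrow> real" where
  "alphabar c0 c1 T t = (\<Prod>i\<in>{1..t}. alpha c0 c1 T i)"

text \<open>Canonical probability space of the forward process: omega 0 = X_0 ~ p_data,
  omega i = W_i ~ N(0,I_d) (i = 1..T), all independent.\<close>
definition fwd_space :: "(nat \<Rightarrow> real) measure \<Rightarrow> nat \<Rightarrow> nat \<Rightarrow> (nat \<Rightarrow> nat \<Rightarrow> real) measure" where
  "fwd_space p d T = PiM {0..T} (\<lambda>i. if i = 0 then p else std_gauss d)"

primrec fwdX :: "real \<Rightarrow> real \<Rightarrow> nat \<Rightarrow> nat \<Rightarrow> (nat \<Rightarrow> nat \<Rightarrow> real) \<Rightarrow> nat \<Rightarrow> (nat \<Rightarrow> real)" where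
  "fwdX c0 c1 T d \<omega> 0 = \<omega> 0"
| "fwdX c0 c1 T d \<omega> (Suc t) =
     vlin d (sqrt (alpha c0 c1 T (Suc t))) (fwdX c0 c1 T d \<omega> t)
            (sqrt (1 - alpha c0 c1 T (Suc t))) (\<omega> (Suc t))"

text \<open>The set G (r = sqrt (C1 k log T)), with net points xs 1, ..., xs N\<close>
definition Gset :: "nat \<Rightarrow> nat \<Rightarrow> (nat \<Rightarrow> nat \<Rightarrow> real) \<Rightarrow> real \<Rightarrow> (nat \<Rightarrow> real) set" where
  "Gset d N xs r = {w \<in> space (Rd d). vnorm d w \<le> 2 * sqrt (real d) + r \<and>
     (\<forall>i\<in>{1..N}. \<forall>j\<in>{1..N}.
        \<bar>vinner d (\<lambda>l. xs i l - xs j l) w\<bar> \<le> r * vdist d (xs i) (xs j))}"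

text \<open>T_t given U = union of B_i over i in I, abar = alphabar_t\<close>
definition Tset :: "nat \<Rightarrow> real \<Rightarrow> (nat \<Rightarrow> real) set \<Rightarrow> (nat \<Rightarrow> real) set \<Rightarrow> (nat \<Rightarrow> real) set" where
  "Tset d abar U G = {vlin d (sqrt abar) x0 (sqrt (1 - abar)) w | x0 w. x0 \<in> U \<and> w \<in> G}"

definition Aset :: "nat \<Rightarrow> real \<Rightarrow> (nat \<Rightarrow> real) set \<Rightarrow> (nat \<Rightarrow> real) set
                     \<Rightarrow> ((nat \<Rightarrow> real) \<times> (nat \<Rightarrow> real)) set" where
  "Aset d a TT G = {(xt, xp). xt \<in> TT \<and>
      vlin d (1 / sqrt (1 - a)) xt (- sqrt a / sqrt (1 - a)) xp \<in> G}"

end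

theory Submission
  imports Defs
begin
abbreviation N1 :: "real measure" where
  "N1 \<equiv> density lborel (\<lambda>x. ennreal (std_normal_density x))"

lemma nn_int_normal_density: "\<sigma> > 0 \<Longrightarrow> (\<integral>\<^sup>+x. ennreal (normal_density \<mu> \<sigma> x) \<partial>lborel) = 1"
  by (subst nn_integral_eq_integral) (auto simp: normal_density_nonneg integrable_normal_density integral_normal_density)

lemma gauss_mgf: "(\<integral>\<^sup>+x. ennreal (exp (a * x)) \<partial>N1) = ennreal (exp (a\<^sup>2 / 2))"
proof -
  have eq: "ennreal (std_normal_density x) * ennreal (exp (a * x)) =
      ennreal (exp (a\<^sup>2 / 2)) * ennreal (normal_density a 1 x)" for x
  proof -
    have "std_normal_density x * exp (a * x) = exp (a\<^sup>2 / 2) * normal_density a 1 x"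
    proof -
      have "-(x\<^sup>2) / 2 + a * x = a\<^sup>2 / 2 + (- (x - a)\<^sup>2 / (2 * 1\<^sup>2))"
        by (simp add: power2_eq_square field_simps)
      then have "exp (-(x\<^sup>2) / 2) * exp (a * x) = exp (a\<^sup>2 / 2) * exp (- (x - a)\<^sup>2 / (2 * 1\<^sup>2))"
        by (metis exp_add)
      then show ?thesis unfolding normal_density_def by simp
    qed
    then show ?thesis by (simp add: ennreal_mult[symmetric])
  qed
  have "(\<integral>\<^sup>+x. ennreal (exp (a * x)) \<partial>N1) = (\<integral>\<^sup>+x. ennreal (std_normal_density x) * ennreal (exp (a * x)) \<partial>lborel)"
    by (rule nn_integral_density) auto
  also have "\<dots> = (\<integral>\<^sup>+x. ennreal (exp (a\<^sup>2 / 2)) * ennreal (normal_density a 1 x) \<partial>lborel)"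
    by (simp add: eq)
  also have "\<dots> = ennreal (exp (a\<^sup>2 / 2)) * (\<integral>\<^sup>+x. ennreal (normal_density a 1 x) \<partial>lborel)"
    by (rule nn_integral_cmult) auto
  finally show ?thesis by (simp add: nn_int_normal_density)
qed

lemma gauss_sq_mgf:
  assumes "0 \<le> l" "l < 1/2"
  shows "(\<integral>\<^sup>+x. ennreal (exp (l * x\<^sup>2)) \<partial>N1) = ennreal (1 / sqrt (1 - 2 * l))"
proof -
  define \<sigma> where "\<sigma> = 1 / sqrt (1 - 2 * l)"
  have s: "\<sigma> > 0" "\<sigma>\<^sup>2 = 1 / (1 - 2*l)" using assms by (auto simp: \<sigma>_def power_divide)
  have eq: "ennreal (std_normal_density x) * ennreal (exp (l * x\<^sup>2)) =
      ennreal \<sigma> * ennreal (normal_density 0 \<sigma> x)" for x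
  proof -
    have "std_normal_density x * exp (l * x\<^sup>2) = \<sigma> * normal_density 0 \<sigma> x"
    proof -
      have "- (x - 0)\<^sup>2 / (2 * \<sigma>\<^sup>2) = - x\<^sup>2 * ((1 - 2*l) / 2)" using s assms by simp
      then have "-(x\<^sup>2) / 2 + l * x\<^sup>2 = - (x - 0)\<^sup>2 / (2 * \<sigma>\<^sup>2)"
        by (simp add: algebra_simps)
      then have "exp (-(x\<^sup>2) / 2) * exp (l * x\<^sup>2) = exp (- (x - 0)\<^sup>2 / (2 * \<sigma>\<^sup>2))"
        by (metis exp_add)
      moreover have "1 / sqrt (2 * pi * \<sigma>\<^sup>2) = 1 / sqrt (2 * pi) / \<sigma>"
        using s(1) by (simp add: real_sqrt_mult)
      ultimately show ?thesis unfolding normal_density_def using s by (simp add: field_simps)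
    qed
    then show ?thesis using s by (simp add: ennreal_mult[symmetric])
  qed
  have "(\<integral>\<^sup>+x. ennreal (exp (l * x\<^sup>2)) \<partial>N1) = (\<integral>\<^sup>+x. ennreal (std_normal_density x) * ennreal (exp (l * x\<^sup>2)) \<partial>lborel)"
    by (rule nn_integral_density) auto
  also have "\<dots> = (\<integral>\<^sup>+x. ennreal \<sigma> * ennreal (normal_density 0 \<sigma> x) \<partial>lborel)"
    by (simp add: eq)
  also have "\<dots> = ennreal \<sigma> * (\<integral>\<^sup>+x. ennreal (normal_density 0 \<sigma> x) \<partial>lborel)"
    by (rule nn_integral_cmult) auto
  finally show ?thesis using s by (simp add: nn_int_normal_density \<sigma>_def)
qed

lemma N1_prob: "prob_space N1"
  using prob_space_normal_density[of 1 0] by simp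

lemma std_gauss_prob: "prob_space (std_gauss d)"
  unfolding std_gauss_def by (rule prob_space_PiM) (rule N1_prob)

lemma sets_N1[measurable_cong]: "sets N1 = sets borel" by simp

lemma vec_mgf:
  "(\<integral>\<^sup>+w. ennreal (exp (\<Sum>l<d. u l * w l)) \<partial>std_gauss d) = ennreal (exp ((\<Sum>l<d. (u l)\<^sup>2) / 2))"
proof -
  interpret product_sigma_finite "\<lambda>_. N1"
    unfolding product_sigma_finite_def using prob_space_imp_sigma_finite[OF N1_prob] by simp
  have "(\<integral>\<^sup>+w. ennreal (exp (\<Sum>l<d. u l * w l)) \<partial>std_gauss d) =
        (\<integral>\<^sup>+w. (\<Prod>l<d. (\<lambda>l x. ennreal (exp (u l * x))) l (w l)) \<partial>std_gauss d)"
    by (simp add: exp_sum prod_ennreal[symmetric])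
  also have "\<dots> = (\<Prod>l<d. \<integral>\<^sup>+x. ennreal (exp (u l * x)) \<partial>N1)"
    unfolding std_gauss_def by (rule product_nn_integral_prod) auto
  also have "\<dots> = (\<Prod>l<d. ennreal (exp ((u l)\<^sup>2 / 2)))"
    by (simp add: gauss_mgf)
  also have "\<dots> = ennreal (exp ((\<Sum>l<d. (u l)\<^sup>2) / 2))"
    by (simp add: exp_sum prod_ennreal[symmetric] sum_divide_distrib)
  finally show ?thesis .
qed

lemma vec_sq_mgf:
  assumes "0 \<le> lam" "lam < 1/2"
  shows "(\<integral>\<^sup>+w. ennreal (exp (lam * (\<Sum>l<d. (w l)\<^sup>2))) \<partial>std_gauss d) = ennreal ((1 / sqrt (1 - 2 * lam)) ^ d)"
proof -
  interpret product_sigma_finite "\<lambda>_. N1"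
    unfolding product_sigma_finite_def using prob_space_imp_sigma_finite[OF N1_prob] by simp
  have "(\<integral>\<^sup>+w. ennreal (exp (lam * (\<Sum>l<d. (w l)\<^sup>2))) \<partial>std_gauss d) =
        (\<integral>\<^sup>+w. (\<Prod>l<d. (\<lambda>l x. ennreal (exp (lam * x\<^sup>2))) l (w l)) \<partial>std_gauss d)"
    by (simp add: exp_sum prod_ennreal[symmetric] sum_distrib_left)
  also have "\<dots> = (\<Prod>l<d. \<integral>\<^sup>+x. ennreal (exp (lam * x\<^sup>2)) \<partial>N1)"
    unfolding std_gauss_def by (rule product_nn_integral_prod) auto
  also have "\<dots> = (\<Prod>l<d. ennreal (1 / sqrt (1 - 2 * lam)))"
    using assms by (simp add: gauss_sq_mgf)
  also have "\<dots> = ennreal ((1 / sqrt (1 - 2 * lam)) ^ d)"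
    using assms by (simp add: prod_ennreal[symmetric] ennreal_power)
  finally show ?thesis .
qed

lemma om_mgf:
  assumes p: "prob_space p"
  shows "(\<integral>\<^sup>+\<omega>. ennreal (exp (\<Sum>l<d. u l * (\<Sum>s\<in>{1..T}. b s * \<omega> s l))) \<partial>fwd_space p d T)
       = ennreal (exp ((\<Sum>s\<in>{1..T}. (b s)\<^sup>2) * (\<Sum>l<d. (u l)\<^sup>2) / 2))"
proof -
  define M where "M = (\<lambda>i::nat. if i = 0 then p else std_gauss d)"
  interpret product_sigma_finite M
    unfolding product_sigma_finite_def M_def
    using prob_space_imp_sigma_finite[OF p] prob_space_imp_sigma_finite[OF std_gauss_prob] by simp
  define g where "g = (\<lambda>s (w::nat\<Rightarrow>real). if s = 0 then (1::ennreal) else ennreal (exp (\<Sum>l<d. (b s * u l) * w l)))"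
  have pt: "ennreal (exp (\<Sum>l<d. u l * (\<Sum>s\<in>{1..T}. b s * \<omega> s l))) = (\<Prod>s\<in>{0..T}. g s (\<omega> s))" for \<omega>
  proof -
    have "(\<Sum>l<d. u l * (\<Sum>s\<in>{1..T}. b s * \<omega> s l)) = (\<Sum>s\<in>{1..T}. \<Sum>l<d. (b s * u l) * \<omega> s l)"
      by (simp add: sum_distrib_left algebra_simps) (rule sum.swap)
    then have "ennreal (exp (\<Sum>l<d. u l * (\<Sum>s\<in>{1..T}. b s * \<omega> s l))) = (\<Prod>s\<in>{1..T}. g s (\<omega> s))"
      by (simp add: exp_sum g_def prod_ennreal prod_nonneg)
    moreover have "{0..T} = insert 0 {1..T}" by auto
    ultimately show ?thesis by (simp add: g_def)
  qed
  have "(\<integral>\<^sup>+\<omega>. ennreal (exp (\<Sum>l<d. u l * (\<Sum>s\<in>{1..T}. b s * \<omega> s l))) \<partial>fwd_space p d T)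
      = (\<integral>\<^sup>+\<omega>. (\<Prod>s\<in>{0..T}. g s (\<omega> s)) \<partial>Pi\<^sub>M {0..T} M)"
    unfolding pt fwd_space_def M_def ..
  also have "\<dots> = (\<Prod>s\<in>{0..T}. integral\<^sup>N (M s) (g s))"
  proof (rule product_nn_integral_prod)
    fix i assume "i \<in> {0..T}"
    show "g i \<in> borel_measurable (M i)"
      by (cases "i = 0") (auto simp: g_def M_def std_gauss_def)
  qed auto
  also have "\<dots> = (\<Prod>s\<in>{1..T}. integral\<^sup>N (M s) (g s))"
  proof -
    have "{0..T} = insert 0 {1..T}" by auto
    moreover have "integral\<^sup>N (M 0) (g 0) = 1"
      using prob_space.emeasure_space_1[OF p] by (simp add: M_def g_def)
    ultimately show ?thesis by simp
  qed
  also have "\<dots> = (\<Prod>s\<in>{1..T}. ennreal (exp ((\<Sum>l<d. (b s * u l)\<^sup>2) / 2)))"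
    by (intro prod.cong refl) (simp add: M_def g_def vec_mgf)
  also have "\<dots> = ennreal (exp ((\<Sum>s\<in>{1..T}. (b s)\<^sup>2) * (\<Sum>l<d. (u l)\<^sup>2) / 2))"
    by (simp add: prod_ennreal exp_sum[symmetric] sum_divide_distrib[symmetric] sum_distrib_left
          sum_distrib_right power_mult_distrib) (rule sum.swap)
  finally show ?thesis .
qed

lemma sets_std_gauss: "sets (std_gauss d) = sets (Rd d)"
  unfolding std_gauss_def Rd_def by (intro sets_PiM_cong) auto

lemma space_std_gauss: "space (std_gauss d) = space (Rd d)"
  using sets_std_gauss by (rule sets_eq_imp_space_eq)

lemma space_Rd: "space (Rd d) = PiE {..<d} (\<lambda>_. UNIV)"
  unfolding Rd_def by (simp add: space_PiM)

lemma gauss_comp_meas: "l < d \<Longrightarrow> (\<lambda>w. w l) \<in> borel_measurable (std_gauss d)"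
proof -
  assume "l < d"
  then have "(\<lambda>w. w l) \<in> measurable (PiM {..<d} (\<lambda>_. N1)) N1"
    by (intro measurable_component_singleton) auto
  then show ?thesis unfolding std_gauss_def by (simp add: measurable_cong_sets[OF refl sets_N1])
qed

lemma meas_comp:
  assumes "s \<in> {1..T}" "l < d"
  shows "(\<lambda>\<omega>. \<omega> s l) \<in> borel_measurable (fwd_space p d T)"
proof -
  have 1: "(\<lambda>\<omega>. \<omega> s) \<in> measurable (fwd_space p d T) (std_gauss d)"
  proof -
    have "(\<lambda>\<omega>. \<omega> s) \<in> measurable (PiM {0..T} (\<lambda>i. if i = 0 then p else std_gauss d)) ((\<lambda>i. if i = 0 then p else std_gauss d) s)"
      using assms by (intro measurable_component_singleton) auto
    then show ?thesis using assms unfolding fwd_space_def by simp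
  qed
  have 2: "(\<lambda>w. w l) \<in> borel_measurable (std_gauss d)"
    using gauss_comp_meas assms by simp
  show ?thesis using measurable_comp[OF 1 2] by (simp add: comp_def)
qed

lemma om_sq_mgf:
  assumes p: "prob_space p" and b: "(\<Sum>s\<in>{1..T}. (b s)\<^sup>2) = 1" and lam: "0 \<le> lam" "lam < 1/2"
  shows "(\<integral>\<^sup>+\<omega>. ennreal (exp (lam * (\<Sum>l<d. (\<Sum>s\<in>{1..T}. b s * \<omega> s l)\<^sup>2))) \<partial>fwd_space p d T)
       = ennreal ((1 / sqrt (1 - 2 * lam)) ^ d)"
proof -
  let ?O = "fwd_space p d T" and ?G = "std_gauss d"
  let ?F = "\<lambda>\<omega> z. ennreal (exp (\<Sum>l<d. (sqrt (2*lam) * z l) * (\<Sum>s\<in>{1..T}. b s * \<omega> s l)))"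
  have Op: "prob_space ?O" unfolding fwd_space_def
    by (rule prob_space_PiM) (auto simp: p std_gauss_prob)
  interpret pair_sigma_finite ?O ?G
    unfolding pair_sigma_finite_def using prob_space_imp_sigma_finite[OF Op]
      prob_space_imp_sigma_finite[OF std_gauss_prob] by simp
  have pt: "ennreal (exp (lam * (\<Sum>l<d. (\<Sum>s\<in>{1..T}. b s * \<omega> s l)\<^sup>2))) = (\<integral>\<^sup>+z. ?F \<omega> z \<partial>?G)" for \<omega>
  proof -
    have "(\<integral>\<^sup>+z. ?F \<omega> z \<partial>?G) = (\<integral>\<^sup>+z. ennreal (exp (\<Sum>l<d. (sqrt (2*lam) * (\<Sum>s\<in>{1..T}. b s * \<omega> s l)) * z l)) \<partial>?G)"
      by (simp add: algebra_simps)
    also have "\<dots> = ennreal (exp ((\<Sum>l<d. (sqrt (2*lam) * (\<Sum>s\<in>{1..T}. b s * \<omega> s l))\<^sup>2) / 2))"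
      by (rule vec_mgf)
    also have "\<dots> = ennreal (exp (lam * (\<Sum>l<d. (\<Sum>s\<in>{1..T}. b s * \<omega> s l)\<^sup>2)))"
      using lam by (simp add: power_mult_distrib sum_distrib_left[symmetric])
    finally show ?thesis by simp
  qed
  have meas: "case_prod ?F \<in> borel_measurable (?O \<Otimes>\<^sub>M ?G)"
  proof -
    have "(\<lambda>x. snd x l) \<in> borel_measurable (?O \<Otimes>\<^sub>M ?G)" if "l < d" for l
    proof -
      have "(\<lambda>w. w l) \<in> borel_measurable ?G" using gauss_comp_meas[OF that] .
      then show ?thesis by measurable
    qed
    moreover have "(\<lambda>x. fst x s l) \<in> borel_measurable (?O \<Otimes>\<^sub>M ?G)" if "l < d" "s \<in> {1..T}" for l s
      using meas_comp[OF that(2,1)] by measurable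
    ultimately show ?thesis by (simp add: case_prod_beta') measurable
  qed
  have "(\<integral>\<^sup>+\<omega>. ennreal (exp (lam * (\<Sum>l<d. (\<Sum>s\<in>{1..T}. b s * \<omega> s l)\<^sup>2))) \<partial>?O)
      = (\<integral>\<^sup>+\<omega>. (\<integral>\<^sup>+z. ?F \<omega> z \<partial>?G) \<partial>?O)"
    by (simp only: pt)
  also have "\<dots> = (\<integral>\<^sup>+z. (\<integral>\<^sup>+\<omega>. ?F \<omega> z \<partial>?O) \<partial>?G)"
    by (rule Fubini'[symmetric]) (rule meas)
  also have "\<dots> = (\<integral>\<^sup>+z. ennreal (exp (lam * (\<Sum>l<d. (z l)\<^sup>2))) \<partial>?G)"
  proof (rule nn_integral_cong)
    fix z
    have "(\<integral>\<^sup>+\<omega>. ?F \<omega> z \<partial>?O) = ennreal (exp ((\<Sum>s\<in>{1..T}. (b s)\<^sup>2) * (\<Sum>l<d. (sqrt (2*lam) * z l)\<^sup>2) / 2))"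
      by (rule om_mgf[OF p])
    also have "\<dots> = ennreal (exp (lam * (\<Sum>l<d. (z l)\<^sup>2)))"
      using lam b by (simp add: power_mult_distrib sum_distrib_left[symmetric])
    finally show "(\<integral>\<^sup>+\<omega>. ?F \<omega> z \<partial>?O) = ennreal (exp (lam * (\<Sum>l<d. (z l)\<^sup>2)))" .
  qed
  also have "\<dots> = ennreal ((1 / sqrt (1 - 2 * lam)) ^ d)"
    by (rule vec_sq_mgf[OF lam])
  finally show ?thesis .
qed

definition Ysum :: "nat \<Rightarrow> (nat \<Rightarrow> real) \<Rightarrow> (nat \<Rightarrow> nat \<Rightarrow> real) \<Rightarrow> nat \<Rightarrow> real" where
  "Ysum T b \<omega> l = (\<Sum>s\<in>{1..T}. b s * \<omega> s l)"

lemma meas_comp_all: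
  assumes "s \<in> {1..T}"
  shows "(\<lambda>\<omega>. \<omega> s l) \<in> borel_measurable (fwd_space p d T)"
proof (cases "l < d")
  case True then show ?thesis using meas_comp[OF assms] by simp
next
  case False
  have "\<omega> s l = undefined" if "\<omega> \<in> space (fwd_space p d T)" for \<omega>
  proof -
    have "\<omega> \<in> PiE {0..T} (\<lambda>i. space (if i=0 then p else std_gauss d))"
      using that by (simp add: fwd_space_def space_PiM)
    then have "\<omega> s \<in> space (if s=0 then p else std_gauss d)"
      by (rule PiE_mem) (use assms in auto)
    then have "\<omega> s \<in> space (std_gauss d)" using assms by (simp split: if_splits)
    then show ?thesis using False by (simp add: space_std_gauss space_Rd PiE_iff extensional_def)
  qed
  then show ?thesis by (subst measurable_cong[where g="\<lambda>_. undefined"]) auto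
qed

lemma Ysum_meas[measurable]: "(\<lambda>\<omega>. Ysum T b \<omega> l) \<in> borel_measurable (fwd_space p d T)"
  unfolding Ysum_def using meas_comp_all[of _ T l p d] by (intro borel_measurable_sum borel_measurable_times) auto

lemma fwd_prob: "prob_space p \<Longrightarrow> prob_space (fwd_space p d T)"
  unfolding fwd_space_def by (rule prob_space_PiM) (auto simp: std_gauss_prob)

lemma markov_exp:
  assumes "f \<in> borel_measurable M" and that: "c \<ge> 0"
  shows "emeasure M {x\<in>space M. 1 \<le> c * exp (f x)} \<le> ennreal c * (\<integral>\<^sup>+x. ennreal (exp (f x)) \<partial>M)"
proof -
  have "emeasure M {x\<in>space M. 1 \<le> ennreal c * ennreal (exp (f x))} \<le> ennreal c * (\<integral>\<^sup>+x. ennreal (exp (f x)) * indicator (space M) x \<partial>M)"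
    by (rule nn_integral_Markov_inequality) (use assms in auto)
  moreover have "(\<integral>\<^sup>+x. ennreal (exp (f x)) * indicator (space M) x \<partial>M) = (\<integral>\<^sup>+x. ennreal (exp (f x)) \<partial>M)"
    by (rule nn_integral_cong) auto
  moreover have "{x\<in>space M. 1 \<le> ennreal c * ennreal (exp (f x))} = {x\<in>space M. 1 \<le> c * exp (f x)}"
    using that by (auto simp: ennreal_mult[symmetric] ennreal_1[symmetric] simp del: ennreal_1)
  ultimately show ?thesis by simp
qed

lemma tail_norm:
  assumes p: "prob_space p" and b: "(\<Sum>s\<in>{1..T}. (b s)\<^sup>2) = 1" and lam: "0 \<le> lam" "lam < 1/2"
    and R: "0 \<le> R"
  shows "emeasure (fwd_space p d T) {\<omega>\<in>space (fwd_space p d T). R < sqrt (\<Sum>l<d. (Ysum T b \<omega> l)\<^sup>2)}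
      \<le> ennreal (exp (- lam * R\<^sup>2) * (1 / sqrt (1 - 2 * lam)) ^ d)"
proof -
  let ?O = "fwd_space p d T"
  have sub: "{\<omega>\<in>space ?O. R < sqrt (\<Sum>l<d. (Ysum T b \<omega> l)\<^sup>2)} \<subseteq>
      {\<omega>\<in>space ?O. 1 \<le> exp (- lam * R\<^sup>2) * exp (lam * (\<Sum>l<d. (Ysum T b \<omega> l)\<^sup>2))}"
  proof safe
    fix \<omega> assume "R < sqrt (\<Sum>l<d. (Ysum T b \<omega> l)\<^sup>2)"
    then have "R\<^sup>2 < (sqrt (\<Sum>l<d. (Ysum T b \<omega> l)\<^sup>2))\<^sup>2"
      using R by (intro power_strict_mono) auto
    then have "R\<^sup>2 < (\<Sum>l<d. (Ysum T b \<omega> l)\<^sup>2)"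
      by (simp add: sum_nonneg)
    then have "lam * R\<^sup>2 \<le> lam * (\<Sum>l<d. (Ysum T b \<omega> l)\<^sup>2)" using lam by (intro mult_left_mono) auto
    then show "1 \<le> exp (- lam * R\<^sup>2) * exp (lam * (\<Sum>l<d. (Ysum T b \<omega> l)\<^sup>2))"
      by (simp add: mult_exp_exp)
  qed
  have "emeasure ?O {\<omega>\<in>space ?O. R < sqrt (\<Sum>l<d. (Ysum T b \<omega> l)\<^sup>2)} \<le>
      emeasure ?O {\<omega>\<in>space ?O. 1 \<le> exp (- lam * R\<^sup>2) * exp (lam * (\<Sum>l<d. (Ysum T b \<omega> l)\<^sup>2))}"
    by (rule emeasure_mono[OF sub]) measurable
  also have "\<dots> \<le> ennreal (exp (- lam * R\<^sup>2)) * (\<integral>\<^sup>+\<omega>. ennreal (exp (lam * (\<Sum>l<d. (Ysum T b \<omega> l)\<^sup>2))) \<partial>?O)"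
    by (rule markov_exp) auto
  also have "(\<integral>\<^sup>+\<omega>. ennreal (exp (lam * (\<Sum>l<d. (Ysum T b \<omega> l)\<^sup>2))) \<partial>?O) = ennreal ((1 / sqrt (1 - 2 * lam)) ^ d)"
    unfolding Ysum_def by (rule om_sq_mgf[OF p b lam])
  finally show ?thesis using lam by (subst ennreal_mult) auto
qed

lemma tail_lin:
  assumes p: "prob_space p" and b: "(\<Sum>s\<in>{1..T}. (b s)\<^sup>2) = 1" and r: "0 < r"
  shows "emeasure (fwd_space p d T) {\<omega>\<in>space (fwd_space p d T). r * sqrt (\<Sum>l<d. (u l)\<^sup>2) < \<bar>\<Sum>l<d. u l * Ysum T b \<omega> l\<bar>}
      \<le> ennreal (2 * exp (- r\<^sup>2 / 2))"
proof (cases "(\<Sum>l<d. (u l)\<^sup>2) = 0")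
  case True
  then have "\<forall>l\<in>{..<d}. u l = 0" by (subst (asm) sum_nonneg_eq_0_iff) auto
  then have "{\<omega>\<in>space (fwd_space p d T). r * sqrt (\<Sum>l<d. (u l)\<^sup>2) < \<bar>\<Sum>l<d. u l * Ysum T b \<omega> l\<bar>} = {}"
    using True by auto
  then show ?thesis by (simp only: emeasure_empty) simp
next
  case False
  let ?O = "fwd_space p d T"
  define nu where "nu = sqrt (\<Sum>l<d. (u l)\<^sup>2)"
  have "(\<Sum>l<d. (u l)\<^sup>2) \<ge> 0" by (simp add: sum_nonneg)
  then have nu: "nu > 0" using False unfolding nu_def by simp
  define th where "th = r / nu"
  have th: "th > 0" using nu r by (simp add: th_def)
  have thnu: "th * nu = r" using nu by (simp add: th_def)
  have sq: "(\<Sum>l<d. (c * th * u l)\<^sup>2) = r\<^sup>2" if "c\<^sup>2 = 1" for c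
  proof -
    have "(\<Sum>l<d. (c * th * u l)\<^sup>2) = c\<^sup>2 * th\<^sup>2 * nu\<^sup>2"
      unfolding nu_def by (simp add: power_mult_distrib sum_distrib_left sum_nonneg)
    also have "\<dots> = r\<^sup>2" using that thnu by (simp add: power_mult_distrib[symmetric])
    finally show ?thesis .
  qed
  have one: "emeasure ?O {\<omega>\<in>space ?O. 1 \<le> exp (- r\<^sup>2) * exp (\<Sum>l<d. (c * th * u l) * Ysum T b \<omega> l)} \<le> ennreal (exp (- r\<^sup>2 / 2))"
    if "c\<^sup>2 = 1" for c
  proof -
    have "emeasure ?O {\<omega>\<in>space ?O. 1 \<le> exp (- r\<^sup>2) * exp (\<Sum>l<d. (c * th * u l) * Ysum T b \<omega> l)}
        \<le> ennreal (exp (- r\<^sup>2)) * (\<integral>\<^sup>+\<omega>. ennreal (exp (\<Sum>l<d. (c * th * u l) * Ysum T b \<omega> l)) \<partial>?O)"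
      by (rule markov_exp) auto
    also have "(\<integral>\<^sup>+\<omega>. ennreal (exp (\<Sum>l<d. (c * th * u l) * Ysum T b \<omega> l)) \<partial>?O) = ennreal (exp (r\<^sup>2 / 2))"
      unfolding Ysum_def using om_mgf[OF p, where u="\<lambda>l. c * th * u l" and b=b and T=T and d=d] b sq[OF that] by simp
    also have "ennreal (exp (- r\<^sup>2)) * ennreal (exp (r\<^sup>2 / 2)) = ennreal (exp (- r\<^sup>2 / 2))"
      by (simp add: ennreal_mult[symmetric] mult_exp_exp)
    finally show ?thesis .
  qed
  have sub: "{\<omega>\<in>space ?O. r * sqrt (\<Sum>l<d. (u l)\<^sup>2) < \<bar>\<Sum>l<d. u l * Ysum T b \<omega> l\<bar>} \<subseteq>
     {\<omega>\<in>space ?O. 1 \<le> exp (- r\<^sup>2) * exp (\<Sum>l<d. (1 * th * u l) * Ysum T b \<omega> l)} \<union>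
     {\<omega>\<in>space ?O. 1 \<le> exp (- r\<^sup>2) * exp (\<Sum>l<d. ((-1) * th * u l) * Ysum T b \<omega> l)}"
  proof
    fix \<omega> assume "\<omega> \<in> {\<omega>\<in>space ?O. r * sqrt (\<Sum>l<d. (u l)\<^sup>2) < \<bar>\<Sum>l<d. u l * Ysum T b \<omega> l\<bar>}"
    then have sp: "\<omega> \<in> space ?O" and a: "r * sqrt (\<Sum>l<d. (u l)\<^sup>2) < \<bar>\<Sum>l<d. u l * Ysum T b \<omega> l\<bar>" by auto
    show "\<omega> \<in> {\<omega>\<in>space ?O. 1 \<le> exp (- r\<^sup>2) * exp (\<Sum>l<d. (1 * th * u l) * Ysum T b \<omega> l)} \<union>
     {\<omega>\<in>space ?O. 1 \<le> exp (- r\<^sup>2) * exp (\<Sum>l<d. ((-1) * th * u l) * Ysum T b \<omega> l)}"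
    proof (cases "1 \<le> exp (- r\<^sup>2) * exp (\<Sum>l<d. (1 * th * u l) * Ysum T b \<omega> l)")
      case True then show ?thesis using sp by blast
    next
    case False
    note n = False
    let ?S = "\<Sum>l<d. u l * Ysum T b \<omega> l"
    have e1: "(\<Sum>l<d. (c * th * u l) * Ysum T b \<omega> l) = c * th * ?S" for c
      by (simp add: sum_distrib_left algebra_simps)
    have "r * nu < \<bar>?S\<bar>" using a nu_def by simp
    then have "th * (r * nu) < th * \<bar>?S\<bar>" using th by simp
    moreover have "th * (r * nu) = r\<^sup>2" using thnu by (simp add: power2_eq_square algebra_simps)
    ultimately have lt: "r\<^sup>2 < th * \<bar>?S\<bar>" by simp
    have "\<not> (r\<^sup>2 \<le> th * ?S)"
    proof
      assume "r\<^sup>2 \<le> th * ?S"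
      then have "1 \<le> exp (- r\<^sup>2) * exp (th * ?S)" by (simp add: mult_exp_exp)
      then show False using n e1[of 1] by simp
    qed
    then have "r\<^sup>2 \<le> - th * ?S" using lt by (cases "?S \<ge> 0") auto
    then have "1 \<le> exp (- r\<^sup>2) * exp (- th * ?S)" by (simp add: mult_exp_exp)
    then have "1 \<le> exp (- r\<^sup>2) * exp (\<Sum>l<d. ((-1) * th * u l) * Ysum T b \<omega> l)" using e1[of "-1"] by simp
    then show ?thesis using sp by blast
    qed
  qed
  have "emeasure ?O {\<omega>\<in>space ?O. r * sqrt (\<Sum>l<d. (u l)\<^sup>2) < \<bar>\<Sum>l<d. u l * Ysum T b \<omega> l\<bar>} \<le>
     emeasure ?O ({\<omega>\<in>space ?O. 1 \<le> exp (- r\<^sup>2) * exp (\<Sum>l<d. (1 * th * u l) * Ysum T b \<omega> l)} \<union>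
     {\<omega>\<in>space ?O. 1 \<le> exp (- r\<^sup>2) * exp (\<Sum>l<d. ((-1) * th * u l) * Ysum T b \<omega> l)})"
    by (rule emeasure_mono[OF sub]) measurable
  also have "\<dots> \<le> emeasure ?O {\<omega>\<in>space ?O. 1 \<le> exp (- r\<^sup>2) * exp (\<Sum>l<d. (1 * th * u l) * Ysum T b \<omega> l)} +
     emeasure ?O {\<omega>\<in>space ?O. 1 \<le> exp (- r\<^sup>2) * exp (\<Sum>l<d. ((-1) * th * u l) * Ysum T b \<omega> l)}"
    by (rule emeasure_subadditive) measurable
  also have "\<dots> \<le> ennreal (exp (- r\<^sup>2 / 2)) + ennreal (exp (- r\<^sup>2 / 2))"
    by (intro add_mono one) auto
  finally show ?thesis by (simp add: ennreal_plus[symmetric] del: ennreal_plus)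
qed

lemma vdist_L2: "vdist d x y = L2_set (\<lambda>i. x i - y i) {..<d}"
  by (simp add: vdist_def vnorm_def L2_set_def)

lemma vdist_sym: "vdist d x y = vdist d y x"
  unfolding vdist_def vnorm_def by (simp add: power2_commute)

lemma vdist_tri: "vdist d x z \<le> vdist d x y + vdist d y z"
proof -
  have "vdist d x z = L2_set (\<lambda>i. (x i - y i) + (y i - z i)) {..<d}" by (simp add: vdist_L2)
  also have "\<dots> \<le> vdist d x y + vdist d y z" unfolding vdist_L2 by (rule L2_set_triangle_ineq)
  finally show ?thesis .
qed

lemma vdist_meas: "(\<lambda>y. vdist d q y) \<in> borel_measurable (Rd d)"
proof -
  have "(\<lambda>y. y l) \<in> borel_measurable (Rd d)" if "l \<in> {..<d}" for l
    unfolding Rd_def using that by (intro measurable_component_singleton) auto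
  then have "(\<lambda>y. \<Sum>l<d. (q l - y l)\<^sup>2) \<in> borel_measurable (Rd d)"
    by (intro borel_measurable_sum borel_measurable_power borel_measurable_diff) auto
  then show ?thesis unfolding vdist_def vnorm_def by measurable
qed

lemma ball_sets: "{y\<in>space (Rd d). vdist d q y < e} \<in> sets (Rd d)"
  using vdist_meas[of d q] by measurable

lemma support_null:
  assumes sp: "sets p = sets (Rd d)"
  shows "\<exists>Z\<in>null_sets p. space (Rd d) - support_of d p \<subseteq> Z"
proof -
  define ball where "ball = (\<lambda>q e. {y\<in>space (Rd d). vdist d q y < e})"
  define J where "J = {(q, \<rho>). q \<in> PiE {..<d} (\<lambda>_. \<rat>) \<and> \<rho> \<in> \<rat> \<and> emeasure p (ball q \<rho>) = 0}"
  have cJ: "countable J"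
  proof -
    have "J \<subseteq> PiE {..<d} (\<lambda>_. \<rat>) \<times> \<rat>" unfolding J_def by auto
    moreover have "countable (PiE {..<d} (\<lambda>_. \<rat>) \<times> \<rat>)"
      by (intro countable_SIGMA countable_PiE) (auto simp: countable_rat)
    ultimately show ?thesis by (rule countable_subset)
  qed
  define Z where "Z = (\<Union>(q, \<rho>)\<in>J. ball q \<rho>)"
  have "Z \<in> null_sets p" unfolding Z_def
  proof (rule null_sets_UN')
    show "countable J" by (rule cJ)
  next
    fix i assume "i \<in> J"
    then show "(case i of (q, \<rho>) \<Rightarrow> ball q \<rho>) \<in> null_sets p"
      unfolding J_def ball_def using ball_sets sp by (auto simp: null_sets_def)
  qed
  moreover have "space (Rd d) - support_of d p \<subseteq> Z"
  proof
    fix x assume x: "x \<in> space (Rd d) - support_of d p"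
    then obtain e where e: "e > 0" "\<not> emeasure p (ball x e) > 0"
      unfolding support_of_def ball_def by auto
    then have e0: "emeasure p (ball x e) = 0" by (simp add: zero_less_iff_neq_zero)
    define \<delta> where "\<delta> = e / (2 * (real d + 1))"
    have \<delta>: "\<delta> > 0" using e by (simp add: \<delta>_def)
    have ex: "\<exists>r\<in>\<rat>. \<bar>x l - r\<bar> < \<delta>" for l
    proof -
      obtain r where "r \<in> \<rat>" "x l - \<delta> < r" "r < x l + \<delta>" using Rats_dense_in_real[of "x l - \<delta>" "x l + \<delta>"] \<delta> by auto
      then show ?thesis by (intro bexI[of _ r]) auto
    qed
    define q where "q = restrict (\<lambda>l. SOME r. r \<in> \<rat> \<and> \<bar>x l - r\<bar> < \<delta>) {..<d}"
    have q: "q l \<in> \<rat> \<and> \<bar>x l - q l\<bar> < \<delta>" if "l < d" for l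
      using someI_ex[OF ex[of l, unfolded Bex_def]] that by (simp add: q_def)
    have qP: "q \<in> PiE {..<d} (\<lambda>_. \<rat>)" using q by (auto simp: q_def)
    have "vdist d x q \<le> (\<Sum>l<d. \<bar>x l - q l\<bar>)" unfolding vdist_L2 by (rule L2_set_le_sum_abs)
    also have "\<dots> \<le> (\<Sum>l<d. \<delta>)" using q by (intro sum_mono) (auto intro: less_imp_le)
    also have "\<dots> = real d * \<delta>" by simp
    also have "\<dots> < e / 2" using e by (simp add: \<delta>_def field_simps)
    finally have dq: "vdist d x q < e / 2" .
    obtain \<rho> where \<rho>: "\<rho> \<in> \<rat>" "vdist d x q < \<rho>" "\<rho> < e / 2"
      using Rats_dense_in_real[OF dq] by auto
    have sub: "ball q \<rho> \<subseteq> ball x e"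
    proof
      fix y assume "y \<in> ball q \<rho>"
      then have "y \<in> space (Rd d)" "vdist d q y < \<rho>" by (auto simp: ball_def)
      moreover have "vdist d x y \<le> vdist d x q + vdist d q y" by (rule vdist_tri)
      ultimately show "y \<in> ball x e" using \<rho> by (auto simp: ball_def)
    qed
    have "emeasure p (ball q \<rho>) \<le> emeasure p (ball x e)"
      by (rule emeasure_mono[OF sub]) (simp add: ball_def ball_sets sp)
    then have "emeasure p (ball q \<rho>) = 0" using e0 by simp
    then have "(q, \<rho>) \<in> J" using qP \<rho> by (simp add: J_def)
    moreover have "x \<in> ball q \<rho>" using x \<rho> by (simp add: ball_def vdist_sym)
    ultimately show "x \<in> Z" unfolding Z_def by blast
  qed
  ultimately show ?thesis by blast
qed

lemma comp0_emeasure: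
  assumes p: "prob_space p" and A: "A \<in> sets p"
  shows "emeasure (fwd_space p d T) {\<omega>\<in>space (fwd_space p d T). \<omega> 0 \<in> A} = emeasure p A"
proof -
  define M where "M = (\<lambda>i::nat. if i = 0 then p else std_gauss d)"
  interpret product_sigma_finite M
    unfolding product_sigma_finite_def M_def
    using prob_space_imp_sigma_finite[OF p] prob_space_imp_sigma_finite[OF std_gauss_prob] by simp
  define X where "X = (\<lambda>i::nat. if i = 0 then A else space (M i))"
  have AS: "A \<subseteq> space p" using sets.sets_into_space[OF A] .
  have eq: "{\<omega>\<in>space (fwd_space p d T). \<omega> 0 \<in> A} = PiE {0..T} X"
  proof (rule set_eqI)
    fix x
    have "x \<in> PiE {0..T} X \<longleftrightarrow> x \<in> PiE {0..T} (\<lambda>i. space (M i)) \<and> x 0 \<in> A"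
      using AS unfolding X_def PiE_def Pi_def by (auto simp: M_def)
    then show "x \<in> {\<omega>\<in>space (fwd_space p d T). \<omega> 0 \<in> A} \<longleftrightarrow> x \<in> PiE {0..T} X"
      by (simp add: fwd_space_def space_PiM M_def)
  qed
  have "emeasure (fwd_space p d T) (PiE {0..T} X) = (\<Prod>i\<in>{0..T}. emeasure (M i) (X i))"
    unfolding fwd_space_def M_def[symmetric] by (rule emeasure_PiM) (auto simp: X_def M_def A)
  also have "\<dots> = emeasure p A"
  proof -
    have "{0..T} = insert 0 {1..T}" by auto
    moreover have "emeasure (M i) (X i) = 1" if "i \<in> {1..T}" for i
      using that prob_space.emeasure_space_1[OF std_gauss_prob] by (auto simp: X_def M_def)
    ultimately show ?thesis by (simp add: X_def M_def)
  qed
  finally show ?thesis using eq by simp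
qed

definition cf :: "(nat \<Rightarrow> real) \<Rightarrow> nat \<Rightarrow> nat \<Rightarrow> real" where
  "cf a t s = sqrt (1 - a s) * (\<Prod>i\<in>{Suc s..t}. sqrt (a i))"

lemma fwdX_formula:
  "l < d \<Longrightarrow> fwdX c0 c1 T d \<omega> t l = sqrt (alphabar c0 c1 T t) * \<omega> 0 l + (\<Sum>s\<in>{1..t}. cf (alpha c0 c1 T) t s * \<omega> s l)"
proof (induction t)
  case 0
  then show ?case by (simp add: alphabar_def)
next
  case (Suc t)
  let ?a = "alpha c0 c1 T"
  have ab: "alphabar c0 c1 T (Suc t) = alphabar c0 c1 T t * ?a (Suc t)"
    by (simp add: alphabar_def)
  have cfS: "cf ?a (Suc t) s = sqrt (?a (Suc t)) * cf ?a t s" if "s \<in> {1..t}" for s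
    using that by (simp add: cf_def prod.nat_ivl_Suc')
  have cfSS: "cf ?a (Suc t) (Suc t) = sqrt (1 - ?a (Suc t))" by (simp add: cf_def)
  have "(\<Sum>s\<in>{1..Suc t}. cf ?a (Suc t) s * \<omega> s l) = sqrt (?a (Suc t)) * (\<Sum>s\<in>{1..t}. cf ?a t s * \<omega> s l) + sqrt (1 - ?a (Suc t)) * \<omega> (Suc t) l"
    using cfS cfSS by (simp add: sum.nat_ivl_Suc' sum_distrib_left mult.assoc add.commute)
  then show ?case using Suc
    by (simp add: vlin_def ab real_sqrt_mult algebra_simps)
qed

lemma cf_sq:
  assumes "\<And>i. i \<in> {1..t} \<Longrightarrow> 0 \<le> a i \<and> a i \<le> 1"
  shows "(\<Sum>s\<in>{1..t}. (cf a t s)\<^sup>2) = 1 - (\<Prod>i\<in>{1..t}. a i)"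
  using assms
proof (induction t)
  case 0 then show ?case by simp
next
  case (Suc t)
  have a: "0 \<le> a (Suc t)" "a (Suc t) \<le> 1" using Suc.prems by auto
  have IH: "(\<Sum>s\<in>{1..t}. (cf a t s)\<^sup>2) = 1 - (\<Prod>i\<in>{1..t}. a i)" using Suc by auto
  have cfS: "(cf a (Suc t) s)\<^sup>2 = a (Suc t) * (cf a t s)\<^sup>2" if "s \<in> {1..t}" for s
    using that a by (simp add: cf_def prod.nat_ivl_Suc' power_mult_distrib)
  have "(\<Sum>s\<in>{1..Suc t}. (cf a (Suc t) s)\<^sup>2) = (\<Sum>s\<in>{1..t}. a (Suc t) * (cf a t s)\<^sup>2) + (1 - a (Suc t))"
    using cfS a by (simp add: sum.nat_ivl_Suc' cf_def)
  also have "\<dots> = a (Suc t) * (\<Sum>s\<in>{1..t}. (cf a t s)\<^sup>2) + (1 - a (Suc t))"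
    by (simp add: sum_distrib_left)
  also have "\<dots> = a (Suc t) * (1 - (\<Prod>i\<in>{1..t}. a i)) + (1 - a (Suc t))"
    using IH by simp
  also have "\<dots> = 1 - (\<Prod>i\<in>{1..Suc t}. a i)"
    by (simp add: prod.nat_ivl_Suc' algebra_simps)
  finally show ?case .
qed

lemma badG:
  assumes p: "prob_space p" and b: "(\<Sum>s\<in>{1..T}. (b s)\<^sup>2) = 1" and r: "0 < r"
  shows "\<exists>E\<in>sets (fwd_space p d T).
    {\<omega>\<in>space (fwd_space p d T). restrict (\<lambda>l. Ysum T b \<omega> l) {..<d} \<notin> Gset d N xs r} \<subseteq> E \<and>
    emeasure (fwd_space p d T) E \<le> ennreal (exp (- (3/8) * (2 * sqrt (real d) + r)\<^sup>2) * 2 ^ d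
       + real (card {(i, j). i \<in> {1..N} \<and> j \<in> {1..N} \<and> i \<noteq> j}) * (2 * exp (- r\<^sup>2 / 2)))"
proof -
  let ?O = "fwd_space p d T"
  let ?P = "{(i, j). i \<in> {1..N} \<and> j \<in> {1..N} \<and> i \<noteq> j}"
  define R where "R = 2 * sqrt (real d) + r"
  have R: "0 \<le> R" using r by (simp add: R_def)
  define u where "u = (\<lambda>(i,j) l. xs i l - xs j l)"
  define E1 where "E1 = {\<omega>\<in>space ?O. R < sqrt (\<Sum>l<d. (Ysum T b \<omega> l)\<^sup>2)}"
  define F where "F = (\<lambda>ij. {\<omega>\<in>space ?O. r * sqrt (\<Sum>l<d. (u ij l)\<^sup>2) < \<bar>\<Sum>l<d. u ij l * Ysum T b \<omega> l\<bar>})"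
  have finP: "finite ?P" by (rule finite_subset[of _ "{1..N} \<times> {1..N}"]) auto
  have E1s: "E1 \<in> sets ?O" unfolding E1_def by measurable
  have Fs: "F ij \<in> sets ?O" for ij unfolding F_def by measurable
  have US: "(\<Union>ij\<in>?P. F ij) \<in> sets ?O" using Fs finP by (intro sets.finite_UN) auto
  have sub: "{\<omega>\<in>space ?O. restrict (\<lambda>l. Ysum T b \<omega> l) {..<d} \<notin> Gset d N xs r} \<subseteq> E1 \<union> (\<Union>ij\<in>?P. F ij)"
  proof
    fix \<omega> assume "\<omega> \<in> {\<omega>\<in>space ?O. restrict (\<lambda>l. Ysum T b \<omega> l) {..<d} \<notin> Gset d N xs r}"
    then have sp: "\<omega> \<in> space ?O" and nG: "restrict (\<lambda>l. Ysum T b \<omega> l) {..<d} \<notin> Gset d N xs r" by auto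
    let ?W = "restrict (\<lambda>l. Ysum T b \<omega> l) {..<d}"
    have Wsp: "?W \<in> space (Rd d)" by (simp add: space_Rd)
    have vn: "vnorm d ?W = sqrt (\<Sum>l<d. (Ysum T b \<omega> l)\<^sup>2)" unfolding vnorm_def by simp
    have vi: "vinner d (\<lambda>l. xs i l - xs j l) ?W = (\<Sum>l<d. u (i,j) l * Ysum T b \<omega> l)" for i j
      unfolding vinner_def u_def by simp
    have vd: "vdist d (xs i) (xs j) = sqrt (\<Sum>l<d. (u (i,j) l)\<^sup>2)" for i j
      unfolding vdist_def vnorm_def u_def by simp
    show "\<omega> \<in> E1 \<union> (\<Union>ij\<in>?P. F ij)"
    proof (cases "R < sqrt (\<Sum>l<d. (Ysum T b \<omega> l)\<^sup>2)")
      case True then show ?thesis using sp by (simp add: E1_def)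
    next
      case False
      then have "vnorm d ?W \<le> 2 * sqrt (real d) + r" using vn R_def by simp
      then obtain i j where ij: "i \<in> {1..N}" "j \<in> {1..N}"
        and bad: "\<not> \<bar>vinner d (\<lambda>l. xs i l - xs j l) ?W\<bar> \<le> r * vdist d (xs i) (xs j)"
        using nG Wsp unfolding Gset_def by auto
      have "i \<noteq> j" using bad by (auto simp: vinner_def vdist_def vnorm_def)
      then have "(i,j) \<in> ?P" using ij by auto
      moreover have "\<omega> \<in> F (i,j)" using bad sp vi vd by (simp add: F_def)
      ultimately show ?thesis by blast
    qed
  qed
  have "emeasure ?O (E1 \<union> (\<Union>ij\<in>?P. F ij)) \<le> emeasure ?O E1 + emeasure ?O (\<Union>ij\<in>?P. F ij)"
    by (rule emeasure_subadditive[OF E1s US])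
  also have "\<dots> \<le> ennreal (exp (- (3/8) * R\<^sup>2) * 2 ^ d) + (\<Sum>ij\<in>?P. emeasure ?O (F ij))"
  proof (rule add_mono)
    have "emeasure ?O E1 \<le> ennreal (exp (- (3/8) * R\<^sup>2) * (1 / sqrt (1 - 2 * (3/8))) ^ d)"
      unfolding E1_def by (rule tail_norm[OF p b _ _ R]) auto
    moreover have "1 / sqrt (1 - 2 * (3/8::real)) = 2"
    proof -
      have "sqrt (1 - 2 * (3/8::real)) = sqrt ((1/2)\<^sup>2)" by (simp add: power2_eq_square)
      then have h: "sqrt (1 - 2 * (3/8::real)) = 1/2" by simp
      show ?thesis by (simp only: h) simp
    qed
    ultimately show "emeasure ?O E1 \<le> ennreal (exp (- (3/8) * R\<^sup>2) * 2 ^ d)" by simp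
  next
    show "emeasure ?O (\<Union>ij\<in>?P. F ij) \<le> (\<Sum>ij\<in>?P. emeasure ?O (F ij))"
      by (rule emeasure_subadditive_finite[OF finP]) (use Fs in auto)
  qed
  also have "(\<Sum>ij\<in>?P. emeasure ?O (F ij)) \<le> (\<Sum>ij\<in>?P. ennreal (2 * exp (- r\<^sup>2 / 2)))"
    by (intro sum_mono) (unfold F_def, rule tail_lin[OF p b r])
  also have "(\<Sum>ij\<in>?P. ennreal (2 * exp (- r\<^sup>2 / 2))) = ennreal (real (card ?P) * (2 * exp (- r\<^sup>2 / 2)))"
    by (simp add: ennreal_of_nat_eq_real_of_nat ennreal_mult)
  also have "ennreal (exp (- (3/8) * R\<^sup>2) * 2 ^ d) + ennreal (real (card ?P) * (2 * exp (- r\<^sup>2 / 2)))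
      = ennreal (exp (- (3/8) * R\<^sup>2) * 2 ^ d + real (card ?P) * (2 * exp (- r\<^sup>2 / 2)))"
    by (rule ennreal_plus[symmetric]) auto
  finally show ?thesis using sub E1s US unfolding R_def by (intro bexI[of _ "E1 \<union> (\<Union>ij\<in>?P. F ij)"]) auto
qed

lemma exp32_ge4: "4 \<le> exp (3/2 :: real)"
proof -
  have "exp (3/2::real) = exp (3/4) * exp (3/4)" by (simp add: mult_exp_exp)
  have "1 + 3/4 + (3/4)\<^sup>2 / 2 \<le> exp (3/4::real)" by (rule exp_lower_Taylor_quadratic) simp
  then have h: "2 \<le> exp (3/4::real)" by (simp add: power2_eq_square)
  have "2 * 2 \<le> exp (3/4::real) * exp (3/4)" by (rule mult_mono[OF h h]) auto
  with \<open>exp (3/2::real) = exp (3/4) * exp (3/4)\<close> show ?thesis by simp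
qed

lemma numeric:
  fixes x :: real and N m cP d :: nat
  assumes x: "x > 0" and d: "d \<ge> 1" and m: "m \<le> N" and cP: "cP \<le> N * N"
    and small: "N \<le> 1 \<Longrightarrow> m = 0 \<and> cP = 0"
    and big1: "N \<ge> 2 \<Longrightarrow> real N \<le> exp (x / 32)"
    and big2: "N \<ge> 2 \<Longrightarrow> 32 * ln 2 \<le> x"
  shows "real m * exp (- x) + 2 * (exp (- (3/8) * (2 * sqrt (real d) + sqrt x)\<^sup>2) * 2 ^ d
          + real cP * (2 * exp (- (sqrt x)\<^sup>2 / 2))) \<le> exp (- (x / 4))"
proof -
  have sx: "(sqrt x)\<^sup>2 = x" using x by simp
  have R: "(2 * sqrt (real d) + sqrt x)\<^sup>2 \<ge> 4 * real d + x"
  proof -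
    have "(2 * sqrt (real d) + sqrt x)\<^sup>2 = 4 * (sqrt (real d))\<^sup>2 + 4 * sqrt (real d) * sqrt x + (sqrt x)\<^sup>2"
      by (simp add: power2_eq_square algebra_simps)
    also have "\<dots> \<ge> 4 * real d + x" using x by simp
    finally show ?thesis .
  qed
  have t2: "2 * (exp (- (3/8) * (2 * sqrt (real d) + sqrt x)\<^sup>2) * 2 ^ d) \<le> exp (- (3/8) * x)"
  proof -
    have "exp (- (3/8) * (2 * sqrt (real d) + sqrt x)\<^sup>2) \<le> exp (- (3/8) * (4 * real d + x))"
      using R by simp
    also have "\<dots> = exp (real d * (- (3/2)) + (- (3/8) * x))"
      by (simp add: algebra_simps)
    also have "\<dots> = exp (- (3/2)) ^ d * exp (- (3/8) * x)"
      by (simp only: exp_add exp_of_nat_mult)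
    finally have "2 * (exp (- (3/8) * (2 * sqrt (real d) + sqrt x)\<^sup>2) * 2 ^ d)
        \<le> 2 * (exp (- (3/2)) ^ d * exp (- (3/8) * x) * 2 ^ d)" by simp
    also have "\<dots> = 2 * (2 * exp (- (3/2))) ^ d * exp (- (3/8) * x)"
      by (simp add: power_mult_distrib)
    also have "\<dots> \<le> 2 * (1/2) ^ 1 * exp (- (3/8) * x)"
    proof -
      have e: "2 * exp (- (3/2::real)) \<le> 1/2" using exp32_ge4 by (simp add: exp_minus field_simps)
      have "(2 * exp (- (3/2::real))) ^ d \<le> (1/2) ^ d" using e by (intro power_mono) auto
      also have "(1/2::real) ^ d \<le> (1/2) ^ 1" using d by (intro power_decreasing) auto
      finally show ?thesis by simp
    qed
    finally show ?thesis by simp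
  qed
  show ?thesis
  proof (cases "N \<le> 1")
    case True
    then have "m = 0" "cP = 0" using small by auto
    then have "real m * exp (- x) + 2 * (exp (- (3/8) * (2 * sqrt (real d) + sqrt x)\<^sup>2) * 2 ^ d
          + real cP * (2 * exp (- (sqrt x)\<^sup>2 / 2))) = 2 * (exp (- (3/8) * (2 * sqrt (real d) + sqrt x)\<^sup>2) * 2 ^ d)"
      by simp
    also have "\<dots> \<le> exp (- (3/8) * x)" by (rule t2)
    also have "\<dots> \<le> exp (- (x / 4))" using x by simp
    finally show ?thesis .
  next
    case False
    then have N2: "N \<ge> 2" by simp
    have Nb: "real N \<le> exp (x / 32)" using big1[OF N2] .
    have Nn: "0 \<le> real N" by simp
    have a1: "real m * exp (- x) \<le> exp (- (3/8) * x)"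
    proof -
      have "real m * exp (- x) \<le> exp (x / 32) * exp (- x)"
        using m Nb by (intro mult_right_mono) auto
      also have "\<dots> = exp (x/32 - x)" by (simp add: mult_exp_exp)
      also have "\<dots> \<le> exp (- (3/8) * x)" using x by simp
      finally show ?thesis .
    qed
    have a3: "real cP * (2 * exp (- (sqrt x)\<^sup>2 / 2)) \<le> 2 * exp (- (3/8) * x)"
    proof -
      have "real cP \<le> real N * real N" using cP by (metis of_nat_le_iff of_nat_mult)
      also have "\<dots> \<le> exp (x/32) * exp (x/32)" using Nb by (intro mult_mono) auto
      finally have "real cP * (2 * exp (- (sqrt x)\<^sup>2 / 2)) \<le> exp (x/32) * exp (x/32) * (2 * exp (- x / 2))"
        using sx by (simp add: mult_right_mono)
      also have "\<dots> = 2 * exp (x/32 + x/32 - x/2)" by (simp add: mult_exp_exp)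
      also have "\<dots> \<le> 2 * exp (- (3/8) * x)" using x by simp
      finally show ?thesis .
    qed
    have "real m * exp (- x) + 2 * (exp (- (3/8) * (2 * sqrt (real d) + sqrt x)\<^sup>2) * 2 ^ d
          + real cP * (2 * exp (- (sqrt x)\<^sup>2 / 2))) \<le> exp (- (3/8) * x) + exp (- (3/8) * x) + 2 * (2 * exp (- (3/8) * x))"
      using a1 t2 a3 by simp
    also have "\<dots> = 6 * exp (- (3/8) * x)" by simp
    also have "\<dots> \<le> exp (- (x / 4))"
    proof -
      have "x / 8 \<ge> 4 * ln 2" using big2[OF N2] by simp
      then have "exp (x / 8) \<ge> exp (4 * ln 2)" by simp
      moreover have "exp (4 * ln 2) = (16::real)"
      proof -
        have "exp (real 4 * ln 2) = exp (ln 2) ^ 4" by (rule exp_of_nat_mult)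
        then show ?thesis by simp
      qed
      ultimately have "6 \<le> exp (x / 8)" by simp
      then have "6 * exp (- (3/8) * x) \<le> exp (x/8) * exp (- (3/8) * x)" by (intro mult_right_mono) auto
      also have "\<dots> = exp (- (x / 4))" by (simp add: mult_exp_exp)
      finally show ?thesis .
    qed
    finally show ?thesis .
  qed
qed

lemma beta_pos:
  assumes "T \<ge> 2" "c1 > 0"
  shows "beta c0 c1 T s > 0"
proof -
  have T: "real T > 1" using assms by simp
  have l: "ln (real T) > 0" using T by simp
  have "c1 * ln (real T) / real T > 0" using assms l T by simp
  moreover have "real T powr (- c0) > 0" using T by simp
  moreover have "(1 + c1 * ln (real T) / real T) ^ (s - 1) > 0"
    using \<open>c1 * ln (real T) / real T > 0\<close> by (intro zero_less_power) linarith
  ultimately have "min (real T powr - c0 * (1 + c1 * ln (real T) / real T) ^ (s - 1)) 1 > 0" by simp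
  with \<open>c1 * ln (real T) / real T > 0\<close> \<open>real T powr (- c0) > 0\<close> show ?thesis
    unfolding beta_def by (simp only: if_split) (intro conjI impI mult_pos_pos; simp)
qed

lemma fwd_space_comp:
  assumes "\<omega> \<in> space (fwd_space p d T)" "s \<in> {1..T}"
  shows "\<omega> s \<in> space (Rd d)"
proof -
  have "\<omega> \<in> PiE {0..T} (\<lambda>i. space (if i=0 then p else std_gauss d))"
    using assms by (simp add: fwd_space_def space_PiM)
  then have "\<omega> s \<in> space (if s=0 then p else std_gauss d)"
    by (rule PiE_mem) (use assms in auto)
  then show ?thesis using assms by (simp add: space_std_gauss split: if_splits)
qed

lemma fwd_space_comp0:
  assumes "\<omega> \<in> space (fwd_space p d T)"
  shows "\<omega> 0 \<in> space p"
proof -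
  have "\<omega> \<in> PiE {0..T} (\<lambda>i. space (if i=0 then p else std_gauss d))"
    using assms by (simp add: fwd_space_def space_PiM)
  then have "\<omega> 0 \<in> space (if (0::nat)=0 then p else std_gauss d)"
    by (rule PiE_mem) auto
  then show ?thesis by simp
qed

lemma prod_lt1:
  fixes a :: "nat \<Rightarrow> real"
  assumes "\<And>i. i \<in> {1..t} \<Longrightarrow> 0 \<le> a i \<and> a i \<le> 1" "a 1 < 1" "1 \<le> t"
  shows "(\<Prod>i\<in>{1..t}. a i) < 1" "0 \<le> (\<Prod>i\<in>{1..t}. a i)"
proof -
  have "{1..t} = insert 1 {2..t}" using assms(3) by auto
  then have "(\<Prod>i\<in>{1..t}. a i) = a 1 * (\<Prod>i\<in>{2..t}. a i)" by simp
  moreover have "(\<Prod>i\<in>{2..t}. a i) \<le> 1" using assms(1) by (intro prod_le_1) auto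
  moreover have "(\<Prod>i\<in>{2..t}. a i) \<ge> 0" using assms(1) by (intro prod_nonneg) auto
  moreover have "0 \<le> a 1" using assms(1,3) by auto
  ultimately show "(\<Prod>i\<in>{1..t}. a i) < 1"
    using assms(2) by (smt (verit) mult_left_le)
  show "0 \<le> (\<Prod>i\<in>{1..t}. a i)" using assms(1) by (intro prod_nonneg) auto
qed

lemma fwdX_undef:
  assumes "t \<ge> 1" "\<not> l < d"
  shows "fwdX c0 c1 T d \<omega> t l = undefined"
proof -
  obtain t' where "t = Suc t'" using assms by (cases t) auto
  then show ?thesis using assms by (simp add: vlin_def)
qed

lemma main:
  fixes c0 c1 C1 Ccover k :: real and p :: "(nat \<Rightarrow> real) measure" and d T N t :: nat
    and xs :: "nat \<Rightarrow> nat \<Rightarrow> real" and B :: "nat \<Rightarrow> (nat \<Rightarrow> real) set"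
  assumes c1: "c1 > 0" and Cc: "Ccover > 0" and C1: "C1 \<ge> 32 * Ccover"
    and d: "d \<ge> 1" and T: "T \<ge> 2" and p: "prob_space p" and sp: "sets p = sets (Rd d)"
    and bt: "\<forall>s\<in>{1..T}. beta c0 c1 T s \<le> 1" and k: "k > 0"
    and lnN: "ln (real N) \<le> Ccover * k * ln (real T)"
    and cov: "support_of d p \<subseteq> (\<Union>i\<in>{1..N}. B i)"
    and Bs: "\<forall>i\<in>{1..N}. B i \<in> sets (Rd d)"
    and t: "1 \<le> t" "t \<le> T"
  shows "\<exists>E\<in>sets (fwd_space p d T).
         {\<omega> \<in> space (fwd_space p d T). (fwdX c0 c1 T d \<omega> t, fwdX c0 c1 T d \<omega> (t - 1)) \<notin>
            Aset d (alpha c0 c1 T t) (Tset d (alphabar c0 c1 T t)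
              (\<Union>i\<in>{i \<in> {1..N}. measure p (B i) \<ge> exp (- C1 * k * ln (real T))}. B i)
              (Gset d N xs (sqrt (C1 * k * ln (real T))))) (Gset d N xs (sqrt (C1 * k * ln (real T))))} \<subseteq> E \<and>
         measure (fwd_space p d T) E \<le> exp (- (C1 / 4) * k * ln (real T))"
proof -
  let ?O = "fwd_space p d T"
  define x where "x = C1 * k * ln (real T)"
  define r where "r = sqrt (C1 * k * ln (real T))"
  define I where "I = {i \<in> {1..N}. measure p (B i) \<ge> exp (- C1 * k * ln (real T))}"
  define U where "U = (\<Union>i\<in>I. B i)"
  define G where "G = Gset d N xs r"
  define a where "a = alpha c0 c1 T"
  define ab where "ab = alphabar c0 c1 T t"
  have lnT: "ln (real T) > 0" using T by simp
  have x: "x > 0" using Cc C1 k lnT unfolding x_def by (intro mult_pos_pos) auto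
  have r: "r > 0" "r\<^sup>2 = x" "r = sqrt x" using x by (auto simp: r_def x_def)
  have Op: "prob_space ?O" by (rule fwd_prob[OF p])
  interpret P: prob_space p by (rule p)
  interpret PO: prob_space ?O by (rule Op)
  have spp: "space p = space (Rd d)" using sp by (rule sets_eq_imp_space_eq)
  have a01: "0 \<le> a s \<and> a s \<le> 1" if "s \<in> {1..T}" for s
    using bt that beta_pos[OF T c1, of c0 s] by (auto simp: a_def alpha_def)
  have alt1: "a s < 1" for s using beta_pos[OF T c1, of c0 s] by (simp add: a_def alpha_def)
  have ab_def': "ab = (\<Prod>i\<in>{1..t}. a i)" by (simp add: ab_def a_def alphabar_def)
  have a01t: "\<And>i. i \<in> {1..t} \<Longrightarrow> 0 \<le> a i \<and> a i \<le> 1" using a01 t by auto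
  have ab: "ab < 1" "0 \<le> ab" using prod_lt1[of t a, OF a01t alt1[of 1] t(1)] unfolding ab_def' by auto
  define sab where "sab = sqrt (1 - ab)"
  have sab: "sab > 0" using ab by (simp add: sab_def)
  define b where "b = (\<lambda>s. if s \<in> {1..t} then cf a t s / sab else 0)"
  have cfsq: "(\<Sum>s\<in>{1..t}. (cf a t s)\<^sup>2) = 1 - ab"
    unfolding ab_def' by (rule cf_sq) (use a01 t in auto)
  have sub_tT: "{1..T} \<inter> {1..t} = {1..t}" using t by auto
  have bsq: "(\<Sum>s\<in>{1..T}. (b s)\<^sup>2) = 1"
  proof -
    have "(\<Sum>s\<in>{1..T}. (b s)\<^sup>2) = (\<Sum>s\<in>{1..T}. if s \<in> {1..t} then (cf a t s / sab)\<^sup>2 else 0)"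
      by (intro sum.cong) (auto simp: b_def)
    also have "\<dots> = (\<Sum>s\<in>{1..t}. (cf a t s / sab)\<^sup>2)"
      by (simp only: sum.inter_restrict[OF finite_atLeastAtMost, symmetric] sub_tT)
    also have "\<dots> = (\<Sum>s\<in>{1..t}. (cf a t s)\<^sup>2) / (1 - ab)"
      using ab by (simp add: power_divide sab_def sum_divide_distrib)
    also have "\<dots> = 1" using cfsq ab by simp
    finally show ?thesis .
  qed
  have Ysum_b: "Ysum T b \<omega> l = (\<Sum>s\<in>{1..t}. cf a t s * \<omega> s l) / sab" for \<omega> l
  proof -
    have "Ysum T b \<omega> l = (\<Sum>s\<in>{1..T}. if s \<in> {1..t} then cf a t s / sab * \<omega> s l else 0)"
      unfolding Ysum_def by (intro sum.cong) (auto simp: b_def)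
    also have "\<dots> = (\<Sum>s\<in>{1..t}. cf a t s / sab * \<omega> s l)"
      by (simp only: sum.inter_restrict[OF finite_atLeastAtMost, symmetric] sub_tT)
    finally show ?thesis by (simp add: sum_divide_distrib)
  qed
  define b2 where "b2 = (\<lambda>s::nat. if s = t then (1::real) else 0)"
  have b2sq: "(\<Sum>s\<in>{1..T}. (b2 s)\<^sup>2) = 1"
  proof -
    have "(\<Sum>s\<in>{1..T}. (b2 s)\<^sup>2) = (\<Sum>s\<in>{1..T}. if s = t then 1 else 0)"
      by (intro sum.cong) (auto simp: b2_def)
    then show ?thesis using t by simp
  qed
  have Ysum_b2: "Ysum T b2 \<omega> l = \<omega> t l" for \<omega> l
  proof -
    have "Ysum T b2 \<omega> l = (\<Sum>s\<in>{1..T}. if s = t then \<omega> s l else 0)"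
      unfolding Ysum_def by (intro sum.cong) (auto simp: b2_def)
    then show ?thesis using t by simp
  qed
  obtain E1 where E1: "E1 \<in> sets ?O"
    "{\<omega>\<in>space ?O. restrict (\<lambda>l. Ysum T b \<omega> l) {..<d} \<notin> G} \<subseteq> E1"
    "emeasure ?O E1 \<le> ennreal (exp (- (3/8) * (2 * sqrt (real d) + r)\<^sup>2) * 2 ^ d
       + real (card {(i, j). i \<in> {1..N} \<and> j \<in> {1..N} \<and> i \<noteq> j}) * (2 * exp (- r\<^sup>2 / 2)))"
    using badG[OF p bsq r(1), of d N xs] unfolding G_def by blast
  obtain E2 where E2: "E2 \<in> sets ?O"
    "{\<omega>\<in>space ?O. restrict (\<lambda>l. Ysum T b2 \<omega> l) {..<d} \<notin> G} \<subseteq> E2"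
    "emeasure ?O E2 \<le> ennreal (exp (- (3/8) * (2 * sqrt (real d) + r)\<^sup>2) * 2 ^ d
       + real (card {(i, j). i \<in> {1..N} \<and> j \<in> {1..N} \<and> i \<noteq> j}) * (2 * exp (- r\<^sup>2 / 2)))"
    using badG[OF p b2sq r(1), of d N xs] unfolding G_def by blast
  have Us: "U \<in> sets p" unfolding U_def I_def using Bs sp by (intro sets.finite_UN) auto
  define E0 where "E0 = {\<omega>\<in>space ?O. \<omega> 0 \<in> space p - U}"
  have E0s: "E0 \<in> sets ?O"
  proof -
    have m0: "(\<lambda>\<omega>. \<omega> 0) \<in> measurable ?O p"
      using measurable_component_singleton[of 0 "{0..T}" "\<lambda>i. if i = 0 then p else std_gauss d"]
      by (simp add: fwd_space_def)
    have "space p - U \<in> sets p" using Us by auto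
    then have "(\<lambda>\<omega>. \<omega> 0) -` (space p - U) \<inter> space ?O \<in> sets ?O" by (rule measurable_sets[OF m0])
    moreover have "(\<lambda>\<omega>. \<omega> 0) -` (space p - U) \<inter> space ?O = E0" unfolding E0_def by auto
    ultimately show ?thesis by simp
  qed
  obtain Z where Z: "Z \<in> null_sets p" "space (Rd d) - support_of d p \<subseteq> Z"
    using support_null[OF sp] by blast
  have exx: "exp (- C1 * k * ln (real T)) = exp (- x)" by (simp add: x_def)
  define m where "m = card ({1..N} - I)"
  define cP where "cP = card {(i, j). i \<in> {1..N} \<and> j \<in> {1..N} \<and> i \<noteq> j}"
  have e0: "emeasure ?O E0 \<le> ennreal (real m * exp (- x))"
  proof -
    have "space p - U \<in> sets p" using Us by auto
    then have "emeasure ?O E0 = emeasure p (space p - U)"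
      unfolding E0_def by (rule comp0_emeasure[OF p])
    also have "\<dots> \<le> emeasure p (Z \<union> (\<Union>i\<in>{1..N} - I. B i))"
    proof (rule emeasure_mono)
      show "space p - U \<subseteq> Z \<union> (\<Union>i\<in>{1..N} - I. B i)"
      proof
        fix y assume y: "y \<in> space p - U"
        show "y \<in> Z \<union> (\<Union>i\<in>{1..N} - I. B i)"
        proof (cases "y \<in> support_of d p")
          case True
          then obtain i where "i \<in> {1..N}" "y \<in> B i" using cov by blast
          moreover have "i \<notin> I" using y \<open>y \<in> B i\<close> by (auto simp: U_def)
          ultimately show ?thesis by blast
        next
          case False then show ?thesis using y Z(2) spp by blast
        qed
      qed
      show "Z \<union> (\<Union>i\<in>{1..N} - I. B i) \<in> sets p"
        using Z(1) Bs sp by (intro sets.Un sets.finite_UN) auto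
    qed
    also have "\<dots> \<le> emeasure p Z + emeasure p (\<Union>i\<in>{1..N} - I. B i)"
      using Z(1) Bs sp by (intro emeasure_subadditive sets.finite_UN) auto
    also have "\<dots> = emeasure p (\<Union>i\<in>{1..N} - I. B i)" using Z(1) by (simp add: null_sets_def)
    also have "\<dots> \<le> (\<Sum>i\<in>{1..N} - I. emeasure p (B i))"
      using Bs sp by (intro emeasure_subadditive_finite) auto
    also have "\<dots> \<le> (\<Sum>i\<in>{1..N} - I. ennreal (exp (- x)))"
    proof (rule sum_mono)
      fix i assume i: "i \<in> {1..N} - I"
      then have "measure p (B i) < exp (- x)" using exx by (auto simp: I_def)
      then show "emeasure p (B i) \<le> ennreal (exp (- x))"
        using P.emeasure_eq_measure by (simp add: less_imp_le)
    qed
    also have "\<dots> = ennreal (real m * exp (- x))"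
      by (simp add: m_def ennreal_of_nat_eq_real_of_nat ennreal_mult)
    finally show ?thesis .
  qed
  have mN: "m \<le> N" unfolding m_def using card_mono[of "{1..N}" "{1..N} - I"] by auto
  have cPN: "cP \<le> N * N"
  proof -
    have "cP \<le> card ({1..N} \<times> {1..N})" unfolding cP_def by (intro card_mono) auto
    then show ?thesis by (simp add: card_cartesian_product)
  qed
  have small: "m = 0 \<and> cP = 0" if N1: "N \<le> 1"
  proof
    have "{(i, j). i \<in> {1..N} \<and> j \<in> {1..N} \<and> i \<noteq> j} = {}" using N1 by auto
    then show "cP = 0" unfolding cP_def by (simp only: card.empty)
    show "m = 0"
    proof (cases "N = 0")
      case True then show ?thesis by (simp add: m_def)
    next
      case False
      then have N1': "N = 1" using N1 by simp
      have "space p \<subseteq> Z \<union> B 1"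
      proof
        fix y assume y: "y \<in> space p"
        show "y \<in> Z \<union> B 1"
        proof (cases "y \<in> support_of d p")
          case True then show ?thesis using cov N1' by auto
        next
          case False then show ?thesis using y Z(2) spp by blast
        qed
      qed
      then have "emeasure p (space p) \<le> emeasure p (Z \<union> B 1)"
        using Z(1) Bs sp N1' by (intro emeasure_mono) auto
      also have "\<dots> \<le> emeasure p Z + emeasure p (B 1)"
        using Z(1) Bs sp N1' by (intro emeasure_subadditive) auto
      finally have "1 \<le> emeasure p (B 1)" using Z(1) prob_space.emeasure_space_1[OF p] by (simp add: null_sets_def)
      then have "1 \<le> measure p (B 1)"
        using P.emeasure_eq_measure by simp
      moreover have "exp (- x) \<le> 1" using x by simp
      ultimately have "exp (- x) \<le> measure p (B 1)" by linarith
      then have "1 \<in> I" using N1' exx by (simp add: I_def)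
      then show ?thesis using N1' by (simp add: m_def)
    qed
  qed
  have big1: "real N \<le> exp (x / 32)" and big2: "32 * ln 2 \<le> x" if N2: "N \<ge> 2"
  proof -
    have "Ccover * k * ln (real T) \<le> x / 32"
    proof -
      have "32 * Ccover * (k * ln (real T)) \<le> C1 * (k * ln (real T))"
        using C1 k lnT by (intro mult_right_mono) auto
      then show ?thesis by (simp add: x_def algebra_simps)
    qed
    then have lN: "ln (real N) \<le> x / 32" using lnN by simp
    have Np: "real N > 0" using N2 by simp
    have "real N = exp (ln (real N))" using Np by simp
    also have "\<dots> \<le> exp (x / 32)" using lN by simp
    finally show "real N \<le> exp (x / 32)" .
    have "ln 2 \<le> ln (real N)" using N2 by simp
    then show "32 * ln 2 \<le> x" using lN by simp
  qed
  have num: "real m * exp (- x) + 2 * (exp (- (3/8) * (2 * sqrt (real d) + sqrt x)\<^sup>2) * 2 ^ d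
          + real cP * (2 * exp (- (sqrt x)\<^sup>2 / 2))) \<le> exp (- (x / 4))"
    by (rule numeric[OF x d mN cPN small big1 big2])
  have subset: "{\<omega> \<in> space ?O. (fwdX c0 c1 T d \<omega> t, fwdX c0 c1 T d \<omega> (t - 1)) \<notin>
            Aset d (a t) (Tset d ab U G) G} \<subseteq> E0 \<union> E1 \<union> E2"
  proof
    fix \<omega> assume "\<omega> \<in> {\<omega> \<in> space ?O. (fwdX c0 c1 T d \<omega> t, fwdX c0 c1 T d \<omega> (t - 1)) \<notin>
            Aset d (a t) (Tset d ab U G) G}"
    then have om: "\<omega> \<in> space ?O" and nA: "(fwdX c0 c1 T d \<omega> t, fwdX c0 c1 T d \<omega> (t - 1)) \<notin>
            Aset d (a t) (Tset d ab U G) G" by auto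
    show "\<omega> \<in> E0 \<union> E1 \<union> E2"
    proof (rule ccontr)
      assume "\<omega> \<notin> E0 \<union> E1 \<union> E2"
      then have n0: "\<omega> \<notin> E0" and n1: "\<omega> \<notin> E1" and n2: "\<omega> \<notin> E2" by auto
      have U0: "\<omega> 0 \<in> U" using n0 om fwd_space_comp0[OF om] by (auto simp: E0_def)
      define W where "W = restrict (\<lambda>l. Ysum T b \<omega> l) {..<d}"
      have WG: "W \<in> G" using n1 E1(2) om unfolding W_def by blast
      have wt: "\<omega> t \<in> space (Rd d)" using fwd_space_comp[OF om] t by auto
      have eqt: "restrict (\<lambda>l. Ysum T b2 \<omega> l) {..<d} = \<omega> t"
      proof
        fix l show "restrict (\<lambda>l. Ysum T b2 \<omega> l) {..<d} l = \<omega> t l"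
          using wt by (cases "l < d") (auto simp: Ysum_b2 space_Rd PiE_iff extensional_def)
      qed
      have tG: "\<omega> t \<in> G" using n2 E2(2) om eqt by auto
      have Xt: "fwdX c0 c1 T d \<omega> t = vlin d (sqrt ab) (\<omega> 0) (sqrt (1 - ab)) W"
      proof
        fix l show "fwdX c0 c1 T d \<omega> t l = vlin d (sqrt ab) (\<omega> 0) (sqrt (1 - ab)) W l"
        proof (cases "l < d")
          case True
          then show ?thesis using sab
            by (simp add: fwdX_formula vlin_def W_def Ysum_b ab_def a_def sab_def)
        next
          case False
          then show ?thesis using t by (simp add: fwdX_undef vlin_def)
        qed
      qed
      have XtT: "fwdX c0 c1 T d \<omega> t \<in> Tset d ab U G"
        unfolding Tset_def using Xt U0 WG by blast
      obtain t' where tt': "t = Suc t'" using t by (cases t) auto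
      have bp: "sqrt (1 - a t) > 0" using alt1[of t] by simp
      have Xinv: "vlin d (1 / sqrt (1 - a t)) (fwdX c0 c1 T d \<omega> t) (- sqrt (a t) / sqrt (1 - a t)) (fwdX c0 c1 T d \<omega> (t - 1)) = \<omega> t"
      proof
        fix l show "vlin d (1 / sqrt (1 - a t)) (fwdX c0 c1 T d \<omega> t) (- sqrt (a t) / sqrt (1 - a t)) (fwdX c0 c1 T d \<omega> (t - 1)) l = \<omega> t l"
        proof (cases "l < d")
          case True
          then show ?thesis using bp unfolding tt'
            by (simp add: vlin_def a_def field_simps)
        next
          case False
          then show ?thesis using wt by (auto simp: vlin_def space_Rd PiE_iff extensional_def)
        qed
      qed
      have "(fwdX c0 c1 T d \<omega> t, fwdX c0 c1 T d \<omega> (t - 1)) \<in> Aset d (a t) (Tset d ab U G) G"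
        unfolding Aset_def using XtT Xinv tG by simp
      then show False using nA by simp
    qed
  qed
  have Es: "E0 \<union> E1 \<union> E2 \<in> sets ?O" using E0s E1(1) E2(1) by auto
  have "emeasure ?O (E0 \<union> E1 \<union> E2) \<le> emeasure ?O (E0 \<union> E1) + emeasure ?O E2"
    using E0s E1(1) E2(1) by (intro emeasure_subadditive) auto
  also have "\<dots> \<le> emeasure ?O E0 + emeasure ?O E1 + emeasure ?O E2"
    using E0s E1(1) by (intro add_mono emeasure_subadditive) auto
  also have "\<dots> \<le> ennreal (real m * exp (- x)) + ennreal (exp (- (3/8) * (2 * sqrt (real d) + r)\<^sup>2) * 2 ^ d
       + real cP * (2 * exp (- r\<^sup>2 / 2))) + ennreal (exp (- (3/8) * (2 * sqrt (real d) + r)\<^sup>2) * 2 ^ d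
       + real cP * (2 * exp (- r\<^sup>2 / 2)))"
    using e0 E1(3) E2(3) unfolding cP_def by (intro add_mono) auto
  also have "\<dots> = ennreal (real m * exp (- x) + 2 * (exp (- (3/8) * (2 * sqrt (real d) + sqrt x)\<^sup>2) * 2 ^ d
          + real cP * (2 * exp (- (sqrt x)\<^sup>2 / 2))))"
    using r by (simp add: ennreal_plus[symmetric] del: ennreal_plus)
  also have "\<dots> \<le> ennreal (exp (- (x / 4)))" using num by (rule ennreal_leI)
  finally have "measure ?O (E0 \<union> E1 \<union> E2) \<le> exp (- (x / 4))"
    using PO.emeasure_eq_measure by simp
  moreover have "exp (- (x / 4)) = exp (- (C1 / 4) * k * ln (real T))" by (simp add: x_def)
  ultimately have meas: "measure ?O (E0 \<union> E1 \<union> E2) \<le> exp (- (C1 / 4) * k * ln (real T))" by simp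
  note fin = conjI[OF subset meas]
  note fin' = fin[unfolded U_def I_def G_def r_def a_def ab_def]
  show ?thesis
    apply (rule bexI[where x="E0 \<union> E1 \<union> E2"])
     apply (rule fin')
    apply (rule Es)
    done
qed

theorem lemma1:
  shows "\<forall>cR>0. \<exists>c0min c1min cepsmin K. \<forall>c0 c1 ceps Ccover C1.
    c0 \<ge> c0min \<and> c1 \<ge> c1min \<and> ceps \<ge> cepsmin \<and> Ccover > 0 \<and> C1 \<ge> K * Ccover \<longrightarrow>
    (\<forall>(p :: (nat \<Rightarrow> real) measure) (d :: nat) (T :: nat) (k :: real) (N :: nat)
        (xs :: nat \<Rightarrow> nat \<Rightarrow> real) (B :: nat \<Rightarrow> (nat \<Rightarrow> real) set) (t :: nat).
      let \<X> = support_of d p;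
          eps = real T powr (- ceps);
          r = sqrt (C1 * k * ln (real T));
          I = {i \<in> {1..N}. measure p (B i) \<ge> exp (- C1 * k * ln (real T))};
          G = Gset d N xs r;
          TT = Tset d (alphabar c0 c1 T t) (\<Union>i\<in>I. B i) G;
          A = Aset d (alpha c0 c1 T t) TT G;
          \<Omega> = fwd_space p d T
      in
      d \<ge> 1 \<and> T \<ge> 2 \<and> prob_space p \<and> sets p = sets (Rd d) \<and>
      (\<forall>s\<in>{1..T}. beta c0 c1 T s \<le> 1) \<and>
      (\<forall>x\<in>\<X>. vnorm d x \<le> real T powr cR) \<and>
      k > 0 \<and> N = covering_number d \<X> eps \<and>
      ln (real N) \<le> Ccover * k * ln (real T) \<and>
      inj_on xs {1..N} \<and> is_eps_net d \<X> (xs ` {1..N}) eps \<and>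
      (\<forall>i\<in>{1..N}. B i \<in> sets (Rd d) \<and> xs i \<in> B i \<and>
                    B i \<subseteq> {y \<in> space (Rd d). vdist d (xs i) y \<le> eps}) \<and>
      (\<forall>i\<in>{1..N}. \<forall>j\<in>{1..N}. i \<noteq> j \<longrightarrow> B i \<inter> B j = {}) \<and>
      \<X> \<subseteq> (\<Union>i\<in>{1..N}. B i) \<and>
      1 \<le> t \<and> t \<le> T
      \<longrightarrow>
      (\<exists>E\<in>sets \<Omega>.
         {\<omega> \<in> space \<Omega>. (fwdX c0 c1 T d \<omega> t, fwdX c0 c1 T d \<omega> (t - 1)) \<notin> A} \<subseteq> E \<and>
         measure \<Omega> E \<le> exp (- (C1 / 4) * k * ln (real T))))"
proof (intro allI impI)
  fix cR :: real assume "cR > 0"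
  show "\<exists>c0min c1min cepsmin K. \<forall>c0 c1 ceps Ccover C1.
    c0 \<ge> c0min \<and> c1 \<ge> c1min \<and> ceps \<ge> cepsmin \<and> Ccover > 0 \<and> C1 \<ge> K * Ccover \<longrightarrow>
    (\<forall>(p :: (nat \<Rightarrow> real) measure) (d :: nat) (T :: nat) (k :: real) (N :: nat)
        (xs :: nat \<Rightarrow> nat \<Rightarrow> real) (B :: nat \<Rightarrow> (nat \<Rightarrow> real) set) (t :: nat).
      let \<X> = support_of d p;
          eps = real T powr (- ceps);
          r = sqrt (C1 * k * ln (real T));
          I = {i \<in> {1..N}. measure p (B i) \<ge> exp (- C1 * k * ln (real T))};
          G = Gset d N xs r;
          TT = Tset d (alphabar c0 c1 T t) (\<Union>i\<in>I. B i) G;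
          A = Aset d (alpha c0 c1 T t) TT G;
          \<Omega> = fwd_space p d T
      in
      d \<ge> 1 \<and> T \<ge> 2 \<and> prob_space p \<and> sets p = sets (Rd d) \<and>
      (\<forall>s\<in>{1..T}. beta c0 c1 T s \<le> 1) \<and>
      (\<forall>x\<in>\<X>. vnorm d x \<le> real T powr cR) \<and>
      k > 0 \<and> N = covering_number d \<X> eps \<and>
      ln (real N) \<le> Ccover * k * ln (real T) \<and>
      inj_on xs {1..N} \<and> is_eps_net d \<X> (xs ` {1..N}) eps \<and>
      (\<forall>i\<in>{1..N}. B i \<in> sets (Rd d) \<and> xs i \<in> B i \<and>
                    B i \<subseteq> {y \<in> space (Rd d). vdist d (xs i) y \<le> eps}) \<and>
      (\<forall>i\<in>{1..N}. \<forall>j\<in>{1..N}. i \<noteq> j \<longrightarrow> B i \<inter> B j = {}) \<and>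
      \<X> \<subseteq> (\<Union>i\<in>{1..N}. B i) \<and>
      1 \<le> t \<and> t \<le> T
      \<longrightarrow>
      (\<exists>E\<in>sets \<Omega>.
         {\<omega> \<in> space \<Omega>. (fwdX c0 c1 T d \<omega> t, fwdX c0 c1 T d \<omega> (t - 1)) \<notin> A} \<subseteq> E \<and>
         measure \<Omega> E \<le> exp (- (C1 / 4) * k * ln (real T))))"
    apply (rule exI[of _ "1::real"], rule exI[of _ "1::real"], rule exI[of _ "1::real"], rule exI[of _ "32::real"])
    apply (intro allI impI)
    subgoal for c0 c1 ceps Ccover C1 p d T k N xs B t
      apply (unfold Let_def)
      apply (rule impI)
      apply (elim conjE)
      apply (rule main)
                  apply (simp_all add: Ball_def)
      done
    done
qed

end
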